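(* Let $k \geq 1$ and $n > 2k$, and let $X^0, \ldots, X^{n-1}$ each code an ordered $2k$-partition of $\omega$, $X^p = X^p_0 \oplus \cdots \oplus X^p_{2k-1}$. Then $\mathrm{Cross}(X^0,\ldots,X^{n-1};2)$ codes an ordered $2k\binom{n}{2}$-partition of $\omega$. Consequently, if $S_0, \ldots, S_{n-1}$ are classes of codes of ordered $2k$-partitions of $\omega$, then every member of $\mathrm{Cross}(S_0,\ldots,S_{n-1};2)$ codes an ordered $2k\binom{n}{2}$-partition of $\omega$.
   Context: A set $X = X_0 \oplus \cdots \oplus X_{m-1}$ codes an ordered $m$-partition of $\omega$ if $\bigcup_{i<m} X_i = \omega$ (the parts need not be disjoint). For ordered $2k$-partitions $X^0,\ldots,X^{n-1}$, $\mathrm{Cross}(X^0,\ldots,X^{n-1};2) = \bigoplus_{j<2k,\ p<q\leq n-1} (X^p_j \cap X^q_j)$ (a join of $2k\binom{n}{2}$ sets in some fixed order). For classes $S_0,\ldots,S_{n-1}$, $\mathrm{Cross}(S_0,\ldots,S_{n-1};2)$ is the class of all $\mathrm{Cross}(X^0,\ldots,X^{n-1};2)$ with $X^p \in S_p$ for each $p \leq n-1$. *)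

theory Defs
  imports Main
begin

definition join_list :: "nat set list \<Rightarrow> nat set" where
  "join_list Ls = {length Ls * x + i | x i. i < length Ls \<and> x \<in> Ls ! i}"

definition part :: "nat \<Rightarrow> nat set \<Rightarrow> nat \<Rightarrow> nat set" where
  "part m X i = {x. m * x + i \<in> X}"

text \<open>X codes an ordered m-partition of omega: the parts (not necessarily disjoint) cover omega.\<close>
definition codes_partition :: "nat \<Rightarrow> nat set \<Rightarrow> bool" where
  "codes_partition m X \<longleftrightarrow> (\<Union>i<m. part m X i) = UNIV"

definition Cross2 :: "nat \<Rightarrow> nat \<Rightarrow> (nat \<Rightarrow> nat set) \<Rightarrow> nat set" where
  "Cross2 k n X = join_list
     [part (2*k) (X p) j \<inter> part (2*k) (X q) j. j \<leftarrow> [0..<2*k], p \<leftarrow> [0..<n], q \<leftarrow> [Suc p..<n]]"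

definition Cross2_class :: "nat \<Rightarrow> nat \<Rightarrow> (nat \<Rightarrow> nat set set) \<Rightarrow> nat set set" where
  "Cross2_class k n S = {Cross2 k n X | X. \<forall>p<n. X p \<in> S p}"

end

theory Submission
  imports Defs
begin

lemma part_join:
  assumes "i < length Ls"
  shows "part (length Ls) (join_list Ls) i = Ls ! i"
proof -
  have "length Ls * y + i = length Ls * x + i' \<and> i' < length Ls \<longleftrightarrow> y = x \<and> i = i' " for x y i'
  proof
    assume h: "length Ls * y + i = length Ls * x + i' \<and> i' < length Ls"
    then have "(length Ls * y + i) mod length Ls = (length Ls * x + i') mod length Ls" by simp
    then have "i mod length Ls = i' mod length Ls" by simp
    then have "i = i'" using h assms by simp
    with h assms show "y = x \<and> i = i'" by auto
  qed (use assms in auto)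
  note eq = this
  show ?thesis unfolding part_def join_list_def
  proof (intro set_eqI iffI)
    fix y assume "y \<in> {x. length Ls * x + i \<in> {length Ls * x + i |x i. i < length Ls \<and> x \<in> Ls ! i}}"
    then obtain x i' where "length Ls * y + i = length Ls * x + i'" "i' < length Ls" "x \<in> Ls ! i'" by auto
    then show "y \<in> Ls ! i" using eq by metis
  next
    fix y assume "y \<in> Ls ! i"
    then show "y \<in> {x. length Ls * x + i \<in> {length Ls * x + i |x i. i < length Ls \<and> x \<in> Ls ! i}}"
      using assms by blast
  qed
qed

lemma join_cover:
  assumes "\<forall>x. \<exists>A\<in>set Ls. x \<in> A"
  shows "codes_partition (length Ls) (join_list Ls)"
  unfolding codes_partition_def
proof (intro set_eqI iffI)
  fix x
  show "x \<in> (\<Union>i<length Ls. part (length Ls) (join_list Ls) i)"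
  proof -
  obtain A where "A \<in> set Ls" "x \<in> A" using assms by blast
  then obtain i where "i < length Ls" "Ls ! i = A" by (auto simp: in_set_conv_nth)
  then show ?thesis
    using part_join \<open>x \<in> A\<close> by auto
  qed
qed auto

lemma sum_choose2: "(\<Sum>p<n. n - Suc p) = n choose 2"
proof (induction n)
  case 0 then show ?case by simp
next
  case (Suc n)
  have "(\<Sum>p<Suc n. Suc n - Suc p) = (\<Sum>p<n. Suc (n - Suc p))"
    by (simp add: sum.lessThan_Suc Suc_diff_Suc)
  also have "\<dots> = (\<Sum>p<n. 1 + (n - Suc p))" by simp
  also have "\<dots> = n + (n choose 2)" using Suc by (simp only: sum.distrib) simp
  also have "\<dots> = Suc n choose 2" by (simp add: choose_two numeral_2_eq_2)
  finally show ?case .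
qed

lemma len_inner: "length (concat (map (\<lambda>p. map (f p) [Suc p..<n]) [0..<n])) = n choose 2"
  by (simp add: length_concat o_def sum_set_upt_conv_sum_list_nat[symmetric] atLeast0LessThan sum_choose2)

lemma mem_concat_map: "x \<in> set (g a) \<Longrightarrow> a \<in> set xs \<Longrightarrow> x \<in> set (concat (map g xs))"
  by auto

lemma main:
  fixes k n :: nat and X :: "nat \<Rightarrow> nat set"
  assumes "n > 2 * k"
    and "\<forall>p<n. codes_partition (2 * k) (X p)"
  shows "codes_partition (2 * k * (n choose 2)) (Cross2 k n X)"
proof -
  define Ls where "Ls = [part (2*k) (X p) j \<inter> part (2*k) (X q) j. j \<leftarrow> [0..<2*k], p \<leftarrow> [0..<n], q \<leftarrow> [Suc p..<n]]"
  have len: "length Ls = 2 * k * (n choose 2)"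
    unfolding Ls_def by (simp add: length_concat o_def len_inner sum_list_triv sum_set_upt_conv_sum_list_nat[symmetric] atLeast0LessThan sum_choose2)
  have cov: "\<forall>x. \<exists>A\<in>set Ls. x \<in> A"
  proof
    fix x
    have "\<forall>p<n. \<exists>j<2*k. x \<in> part (2*k) (X p) j"
      using assms(2) unfolding codes_partition_def by blast
    then obtain f where f: "\<forall>p<n. f p < 2*k \<and> x \<in> part (2*k) (X p) (f p)" by metis
    have "f ` {0..<n} \<subseteq> {0..<2*k}" using f by auto
    moreover have "card {0..<2*k} < card {0..<n}" using assms(1) by simp
    ultimately have "\<not> inj_on f {0..<n}"
      by (metis card_inj_on_le finite_atLeastLessThan leD)
    then obtain p q where pq: "p < n" "q < n" "p \<noteq> q" "f p = f q"
      unfolding inj_on_def by auto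
    then obtain p' q' where pq': "p' < q'" "q' < n" "f p' = f q'"
      by (metis linorder_neqE_nat)
    then have "x \<in> part (2*k) (X p') (f p') \<inter> part (2*k) (X q') (f p')" using f
      by (metis IntI less_trans)
    moreover have "part (2*k) (X p') (f p') \<inter> part (2*k) (X q') (f p') \<in> set Ls"

    proof -
      have j: "f p' \<in> {0..<2*k}" using f pq' by auto
      have p: "p' \<in> {0..<n}" using pq' by auto
      have q: "q' \<in> {Suc p'..<n}" using pq' by auto
      let ?A = "part (2*k) (X p') (f p') \<inter> part (2*k) (X q') (f p')"
      have "?A \<in> set (map (\<lambda>q. part (2*k) (X p') (f p') \<inter> part (2*k) (X q) (f p')) [Suc p'..<n])"
        using q by simp
      then have "?A \<in> set (concat (map (\<lambda>p. map (\<lambda>q. part (2*k) (X p) (f p') \<inter> part (2*k) (X q) (f p')) [Suc p..<n]) [0..<n]))"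
        by (rule mem_concat_map[where g="\<lambda>p. map (\<lambda>q. part (2*k) (X p) (f p') \<inter> part (2*k) (X q) (f p')) [Suc p..<n]"]) (use p in simp)
      then have "?A \<in> set (concat (map (\<lambda>j. concat (map (\<lambda>p. map (\<lambda>q. part (2*k) (X p) j \<inter> part (2*k) (X q) j) [Suc p..<n]) [0..<n])) [0..<2*k]))"
        using mem_concat_map[of ?A "\<lambda>j. concat (map (\<lambda>p. map (\<lambda>q. part (2*k) (X p) j \<inter> part (2*k) (X q) j) [Suc p..<n]) [0..<n])" "f p'" "[0..<2*k]"] j by simp
      then show ?thesis unfolding Ls_def by simp
    qed
    ultimately show "\<exists>A\<in>set Ls. x \<in> A" by blast
  qed
  show ?thesis using join_cover[OF cov] len unfolding Cross2_def Ls_def by simp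
qed

theorem lemma6p1:
  fixes k n :: nat and X :: "nat \<Rightarrow> nat set"
  assumes "k \<ge> 1" and "n > 2 * k"
    and "\<forall>p<n. codes_partition (2 * k) (X p)"
  shows "codes_partition (2 * k * (n choose 2)) (Cross2 k n X)
     \<and> (\<forall>S :: nat \<Rightarrow> nat set set.
          (\<forall>p<n. \<forall>Y\<in>S p. codes_partition (2 * k) Y) \<longrightarrow>
          (\<forall>Z\<in>Cross2_class k n S. codes_partition (2 * k * (n choose 2)) Z))"
  using main[OF assms(2,3)] main[OF assms(2)] unfolding Cross2_class_def by blast

end
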